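(* Let $n\ge 2$, $T=\{1,\dots,n\}$, $\mathcal T$ a topology on $T$, and fix $k\ge 1$ such that the set $I=\{1,\dots,n-1\}\setminus X_{k-1}$ of indices of new quotient spaces is nonempty. Suppose all $N_i$, $i\in I$, are equal to a common value $s$ (Case 1: $\mu_1\ne 0$, $\mu_2=\mu_3=0$). Then the new $k$-systems of $\mathcal T$ form one of the following configurations, where each $A_j$ denotes a (possibly empty) set of old points and each $R_j$ a nonempty set of new points: (1a) the new $k$-systems are exactly $s+1$ upper non-paired $k$-systems $A_1\cup R_1,\dots,A_{s+1}\cup R_{s+1}$, each new point lies in exactly one of the sets $R_j$, and $\mu_1$ equals the total number of new points; (1b) the new $k$-systems are exactly $s$ pairs $A_j\cup R_j$, $A_j\cup R_j\cup\{n\}$ ($j=1,\dots,s$); (1c) there are no new $k$-systems (and $s=0$); (1d) the new $k$-systems are exactly lower $k$-systems $A_1\cup R_1\cup\{n\},\dots,A_x\cup R_x\cup\{n\}$ (non-paired), and each new point lies in exactly one of the sets $R_j$.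
   Context: For $\alpha\in T$, $\alpha^{*}$ denotes the smallest open set of $\mathcal T$ containing $\alpha$. For $m\ge 0$, an $m$-system is an open set $P$ with $|P\setminus\{n\}|=m$; upper if $n\notin P$, lower if $n\in P$. Two $k$-systems $P$ and $P\cup\{n\}$ ($n\notin P$) that are both open are called paired; a $k$-system not part of such a pair is non-paired. At stage $k$, a point $\alpha\neq n$ is old if $\alpha^{*}$ is an $m$-system for some $m<k$, and new if $\alpha^{*}$ is a $k$-system; $X_{k-1}$ is the set of old points. A $k$-system is new if it contains a point $p\neq n$ not contained in any $m$-system with $m\le k-1$. For $i\in\{1,\dots,n-1\}$, $Q^{i}$ is the quotient space obtained by identifying $i$ and $n$ (natural map $f_i$ onto $T(i,n)=\{\{z\}:z\notin\{i,n\}\}\cup\{\{i,n\}\}$; $V$ open iff $f_i^{-1}(V)\in\mathcal T$). $Q^{i}$ is a new quotient space if $i\notin X_{k-1}$. A new open $k$-set of $Q^{i}$ is an open $V$ of $Q^{i}$ with $|V|=k$ such that $f_i^{-1}(V)$ is a new $k$-system; $N_i$ is their number. With $s=\min_{i\in I}N_i$, $\mu_1,\mu_2,\mu_3$ denote the numbers of $i\in I$ with $N_i=s$, $s+1$, $s+2$ respectively (by a theorem of the paper, $N_i\in\{s,s+1,s+2\}$ always). *)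

theory Defs
  imports "HOL-Analysis.Analysis"
begin

text \<open>A topology on T = {1..n} is a value X :: nat topology with topspace X = {1..n};
  the open sets are those U with openin X U. The distinguished point is n.\<close>

definition star :: "nat topology \<Rightarrow> nat \<Rightarrow> nat set" where
  "star X a = \<Inter>{U. openin X U \<and> a \<in> U}"

definition msystem :: "nat topology \<Rightarrow> nat \<Rightarrow> nat \<Rightarrow> nat set \<Rightarrow> bool" where
  "msystem X n m P \<longleftrightarrow> openin X P \<and> card (P - {n}) = m"

text \<open>Old points at stage k (the set X_{k-1}) and new points at stage k.\<close>
definition old_pts :: "nat topology \<Rightarrow> nat \<Rightarrow> nat \<Rightarrow> nat set" where
  "old_pts X n k = {a \<in> topspace X. a \<noteq> n \<and> (\<exists>m<k. msystem X n m (star X a))}"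

definition new_pts :: "nat topology \<Rightarrow> nat \<Rightarrow> nat \<Rightarrow> nat set" where
  "new_pts X n k = {a \<in> topspace X. a \<noteq> n \<and> msystem X n k (star X a)}"

definition new_ksys :: "nat topology \<Rightarrow> nat \<Rightarrow> nat \<Rightarrow> nat set \<Rightarrow> bool" where
  "new_ksys X n k P \<longleftrightarrow> msystem X n k P \<and>
     (\<exists>p\<in>P. p \<noteq> n \<and> (\<forall>m Q. m \<le> k - 1 \<and> msystem X n m Q \<longrightarrow> p \<notin> Q))"

definition qmap :: "nat \<Rightarrow> nat \<Rightarrow> nat \<Rightarrow> nat set" where
  "qmap n i z = (if z = i \<or> z = n then {i, n} else {z})"

definition qpre :: "nat topology \<Rightarrow> nat \<Rightarrow> nat \<Rightarrow> nat set set \<Rightarrow> nat set" where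
  "qpre X n i V = {z \<in> topspace X. qmap n i z \<in> V}"

definition qopen :: "nat topology \<Rightarrow> nat \<Rightarrow> nat \<Rightarrow> nat set set \<Rightarrow> bool" where
  "qopen X n i V \<longleftrightarrow> V \<subseteq> qmap n i ` topspace X \<and> openin X (qpre X n i V)"

definition Nnew :: "nat topology \<Rightarrow> nat \<Rightarrow> nat \<Rightarrow> nat \<Rightarrow> nat" where
  "Nnew X n k i = card {V. qopen X n i V \<and> card V = k \<and> new_ksys X n k (qpre X n i V)}"

definition Iset :: "nat topology \<Rightarrow> nat \<Rightarrow> nat \<Rightarrow> nat set" where
  "Iset X n k = {1..n-1} - old_pts X n k"

definition smin :: "nat topology \<Rightarrow> nat \<Rightarrow> nat \<Rightarrow> nat" where
  "smin X n k = Min (Nnew X n k ` Iset X n k)"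

text \<open>mu X n k t = number of i in I with N_i = t
  (mu_1, mu_2, mu_3 correspond to t = s, s+1, s+2).\<close>
definition mu :: "nat topology \<Rightarrow> nat \<Rightarrow> nat \<Rightarrow> nat \<Rightarrow> nat" where
  "mu X n k t = card {i \<in> Iset X n k. Nnew X n k i = t}"

end

theory Submission
  imports Defs
begin


locale L = fixes X :: "nat topology" and n k :: nat
  assumes n2: "n \<ge> 2" and top: "topspace X = {1..n}" and k1: "k \<ge> 1"
begin

lemma fin_open: "openin X U \<Longrightarrow> finite U"
  using openin_subset top finite_subset by (metis finite_atLeastAtMost)

lemma star_in: "a \<in> topspace X \<Longrightarrow> a \<in> star X a"
  unfolding star_def by blast

lemma star_open: "a \<in> topspace X \<Longrightarrow> openin X (star X a)"
proof -
  assume a: "a \<in> topspace X"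
  let ?F = "{U. openin X U \<and> a \<in> U}"
  have "?F \<subseteq> Pow (topspace X)" using openin_subset by blast
  hence "finite ?F" using top by (metis finite_Pow_iff finite_atLeastAtMost rev_finite_subset)
  moreover have "?F \<noteq> {}" using a by auto
  ultimately show ?thesis unfolding star_def by (intro openin_Inter) auto
qed

lemma star_min: "openin X U \<Longrightarrow> a \<in> U \<Longrightarrow> star X a \<subseteq> U"
  unfolding star_def by blast

lemma star_sub: "a \<in> topspace X \<Longrightarrow> star X a \<subseteq> topspace X"
  using star_open openin_subset by blast

lemma old_iff: "a \<in> old_pts X n k \<longleftrightarrow> a \<in> topspace X \<and> a \<noteq> n \<and> card (star X a - {n}) < k"
  unfolding old_pts_def msystem_def using star_open by auto

lemma new_iff: "a \<in> new_pts X n k \<longleftrightarrow> a \<in> topspace X \<and> a \<noteq> n \<and> card (star X a - {n}) = k"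
  unfolding new_pts_def msystem_def using star_open by auto

lemma newk_iff: "new_ksys X n k P \<longleftrightarrow> openin X P \<and> (\<exists>p\<in>new_pts X n k. P - {n} = star X p - {n})"
proof
  assume h: "new_ksys X n k P"
  then obtain p where p: "p \<in> P" "p \<noteq> n" and np: "\<forall>m Q. m \<le> k - 1 \<and> msystem X n m Q \<longrightarrow> p \<notin> Q"
    and o: "openin X P" and c: "card (P - {n}) = k"
    unfolding new_ksys_def msystem_def by blast
  have pt: "p \<in> topspace X" using o p openin_subset by blast
  have sP: "star X p \<subseteq> P" using star_min o p by blast
  have "\<not> card (star X p - {n}) < k"
  proof
    assume "card (star X p - {n}) < k"
    hence "card (star X p - {n}) \<le> k - 1 \<and> msystem X n (card (star X p - {n})) (star X p)"
      unfolding msystem_def using star_open pt by auto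
    thus False using np star_in pt by blast
  qed
  moreover have fin: "finite (P - {n})" using fin_open o by auto
  moreover have "star X p - {n} \<subseteq> P - {n}" using sP by auto
  ultimately have "star X p - {n} = P - {n}" using c card_mono card_subset_eq
    by (metis le_antisym not_less)
  moreover hence "p \<in> new_pts X n k" using new_iff pt p c by auto
  ultimately show "openin X P \<and> (\<exists>p\<in>new_pts X n k. P - {n} = star X p - {n})" using o by auto
next
  assume "openin X P \<and> (\<exists>p\<in>new_pts X n k. P - {n} = star X p - {n})"
  then obtain p where o: "openin X P" and p: "p \<in> new_pts X n k" and e: "P - {n} = star X p - {n}" by blast
  have pt: "p \<in> topspace X" "p \<noteq> n" "card (star X p - {n}) = k" using p new_iff by auto
  have pP: "p \<in> P" using e star_in pt by blast
  have "\<forall>m Q. m \<le> k - 1 \<and> msystem X n m Q \<longrightarrow> p \<notin> Q"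
  proof (intro allI impI)
    fix m Q assume mq: "m \<le> k - 1 \<and> msystem X n m Q"
    show "p \<notin> Q"
    proof
      assume "p \<in> Q"
      hence "star X p - {n} \<subseteq> Q - {n}" using star_min mq unfolding msystem_def by blast
      hence "k \<le> card (Q - {n})" using pt fin_open mq unfolding msystem_def
        by (metis card_mono finite_Diff)
      thus False using mq k1 unfolding msystem_def by auto
    qed
  qed
  thus "new_ksys X n k P" unfolding new_ksys_def msystem_def using o e pt pP by auto
qed

lemma mem_newk: "new_ksys X n k W \<Longrightarrow> p \<in> new_pts X n k \<Longrightarrow> p \<in> W \<longleftrightarrow> W - {n} = star X p - {n}"
proof
  assume W: "new_ksys X n k W" and p: "p \<in> new_pts X n k" and pW: "p \<in> W"
  have o: "openin X W" and c: "card (W - {n}) = k" using W unfolding new_ksys_def msystem_def by auto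
  have "star X p - {n} \<subseteq> W - {n}" using star_min o pW by blast
  moreover have "card (star X p - {n}) = k" using p new_iff by auto
  moreover have "finite (W - {n})" using fin_open o by auto
  ultimately show "W - {n} = star X p - {n}" using c card_subset_eq by metis
next
  assume "new_ksys X n k W" "p \<in> new_pts X n k" "W - {n} = star X p - {n}"
  thus "p \<in> W" using new_iff star_in by blast
qed

lemma sub_oldnew: "new_ksys X n k W \<Longrightarrow> W - {n} \<subseteq> old_pts X n k \<union> new_pts X n k"
proof
  fix q assume W: "new_ksys X n k W" and q: "q \<in> W - {n}"
  have o: "openin X W" and c: "card (W - {n}) = k" using W unfolding new_ksys_def msystem_def by auto
  have qt: "q \<in> topspace X" using o q openin_subset by blast
  have "star X q - {n} \<subseteq> W - {n}" using star_min o q by blast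
  hence "card (star X q - {n}) \<le> k" using c fin_open o by (metis card_mono finite_Diff)
  thus "q \<in> old_pts X n k \<union> new_pts X n k" using old_iff new_iff qt q by auto
qed

lemma big_not_in: "i \<in> topspace X \<Longrightarrow> i \<noteq> n \<Longrightarrow> i \<notin> old_pts X n k \<Longrightarrow> i \<notin> new_pts X n k
   \<Longrightarrow> new_ksys X n k W \<Longrightarrow> i \<notin> W"
  using sub_oldnew by blast

end

context L begin

lemma qpre_img: "V \<subseteq> qmap n i ` topspace X \<Longrightarrow> qmap n i ` qpre X n i V = V"
  unfolding qpre_def by auto

lemma qpre_iff: "i \<in> {1..n-1} \<Longrightarrow> i \<in> qpre X n i V \<longleftrightarrow> n \<in> qpre X n i V"
  unfolding qpre_def qmap_def using top n2 by auto

lemma qpre_back: assumes i: "i \<in> {1..n-1}" and W: "W \<subseteq> topspace X" and iff: "i \<in> W \<longleftrightarrow> n \<in> W"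
  shows "qpre X n i (qmap n i ` W) = W"
proof
  show "W \<subseteq> qpre X n i (qmap n i ` W)" unfolding qpre_def using W by auto
  show "qpre X n i (qmap n i ` W) \<subseteq> W"
  proof
    fix z assume "z \<in> qpre X n i (qmap n i ` W)"
    then obtain w where w: "w \<in> W" "qmap n i z = qmap n i w" unfolding qpre_def by auto
    show "z \<in> W"
    proof (cases "z = i \<or> z = n")
      case True
      hence "w = i \<or> w = n" using w i unfolding qmap_def by (auto split: if_splits)
      thus ?thesis using True iff w by auto
    next
      case False
      hence "{z} = qmap n i w" using w unfolding qmap_def by auto
      hence "w = z" unfolding qmap_def using i by (auto split: if_splits)
      thus ?thesis using w by auto
    qed
  qed
qed

lemma qcard: assumes i: "i \<in> {1..n-1}" and W: "W \<subseteq> topspace X" and iff: "i \<in> W \<longleftrightarrow> n \<in> W"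
  shows "card (qmap n i ` W) = card (W - {n})"
proof -
  have "qmap n i ` W = qmap n i ` (W - {n})"
  proof
    show "qmap n i ` W \<subseteq> qmap n i ` (W - {n})"
    proof
      fix v assume "v \<in> qmap n i ` W"
      then obtain w where w: "w \<in> W" "v = qmap n i w" by auto
      show "v \<in> qmap n i ` (W - {n})"
      proof (cases "w = n")
        case True
        hence "i \<in> W - {n}" using iff w i by auto
        moreover have "qmap n i i = v" using True w unfolding qmap_def by auto
        ultimately show ?thesis by force
      qed (use w in auto)
    qed
  qed auto
  moreover have "inj_on (qmap n i) (W - {n})"
    unfolding inj_on_def qmap_def using i by (auto split: if_splits)
  ultimately show ?thesis by (simp add: card_image)
qed

lemma Nnew_eq: assumes i: "i \<in> {1..n-1}"
  shows "Nnew X n k i = card {W. new_ksys X n k W \<and> (i \<in> W \<longleftrightarrow> n \<in> W)}"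
proof -
  let ?A = "{V. qopen X n i V \<and> card V = k \<and> new_ksys X n k (qpre X n i V)}"
  let ?B = "{W. new_ksys X n k W \<and> (i \<in> W \<longleftrightarrow> n \<in> W)}"
  have "bij_betw (qpre X n i) ?A ?B"
  proof (rule bij_betw_imageI)
    show "inj_on (qpre X n i) ?A"
      unfolding inj_on_def qopen_def by (metis (no_types, lifting) mem_Collect_eq qpre_img)
    show "qpre X n i ` ?A = ?B"
    proof
      show "qpre X n i ` ?A \<subseteq> ?B" using qpre_iff[OF i] by auto
      show "?B \<subseteq> qpre X n i ` ?A"
      proof
        fix W assume "W \<in> ?B"
        hence W: "new_ksys X n k W" "i \<in> W \<longleftrightarrow> n \<in> W" by auto
        have o: "openin X W" and c: "card (W - {n}) = k" using W unfolding new_ksys_def msystem_def by auto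
        have Wt: "W \<subseteq> topspace X" using o openin_subset by blast
        have e: "qpre X n i (qmap n i ` W) = W" using qpre_back[OF i Wt W(2)] .
        have "qmap n i ` W \<in> ?A"
          unfolding qopen_def using e o Wt W qcard[OF i Wt W(2)] c by auto
        thus "W \<in> qpre X n i ` ?A" using e by force
      qed
    qed
  qed
  thus ?thesis unfolding Nnew_def by (rule bij_betw_same_card)
qed

end

context L begin

abbreviation "Sk \<equiv> {W. new_ksys X n k W}"
abbreviation "Su \<equiv> {W. new_ksys X n k W \<and> n \<notin> W}"
abbreviation "bb p \<equiv> star X p - {n}"

lemma finS: "finite Sk"
proof -
  have "Sk \<subseteq> Pow (topspace X)" unfolding new_ksys_def msystem_def using openin_subset by blast
  thus ?thesis using top by (metis finite_Pow_iff finite_atLeastAtMost rev_finite_subset)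
qed

lemma finSu: "finite Su" using finS by (rule rev_finite_subset) auto

lemma new_sub: "p \<in> new_pts X n k \<Longrightarrow> p \<in> {1..n-1} \<and> p \<notin> old_pts X n k"
  using new_iff old_iff top by auto

lemma bb_in: "p \<in> new_pts X n k \<Longrightarrow> n \<notin> bb p" by auto

lemma star_cases: "p \<in> new_pts X n k \<Longrightarrow> openin X (bb p) \<or> openin X (bb p \<union> {n})"
proof -
  assume p: "p \<in> new_pts X n k"
  hence "openin X (star X p)" using star_open new_iff by auto
  moreover have "star X p = bb p \<or> star X p = bb p \<union> {n}" by auto
  ultimately show ?thesis by metis
qed

lemma bb_S: "p \<in> new_pts X n k \<Longrightarrow> openin X (bb p) \<Longrightarrow> new_ksys X n k (bb p)"
  using newk_iff by auto

lemma bbn_S: "p \<in> new_pts X n k \<Longrightarrow> openin X (bb p \<union> {n}) \<Longrightarrow> new_ksys X n k (bb p \<union> {n})"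
  using newk_iff by auto

lemma Nbig: assumes i: "i \<in> Iset X n k" and ni: "i \<notin> new_pts X n k"
  shows "Nnew X n k i = card Su"
proof -
  have i1: "i \<in> {1..n-1}" using i unfolding Iset_def by auto
  have "i \<in> topspace X" "i \<noteq> n" "i \<notin> old_pts X n k" using i1 top n2 i unfolding Iset_def by auto
  hence "{W. new_ksys X n k W \<and> (i \<in> W \<longleftrightarrow> n \<in> W)} = Su" using big_not_in[OF _ _ _ ni] by blast
  thus ?thesis using Nnew_eq[OF i1] by simp
qed

lemma Nnewpt: assumes p: "p \<in> new_pts X n k"
  shows "Nnew X n k p = (if openin X (bb p) then card Su - 1 else card Su)
                        + (if openin X (bb p \<union> {n}) then 1 else 0)"
    and "openin X (bb p) \<Longrightarrow> card Su \<ge> 1"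
proof -
  have p1: "p \<in> {1..n-1}" using new_sub p by auto
  let ?E = "if openin X (bb p \<union> {n}) then {bb p \<union> {n}} else {}"
  have eq: "{W. new_ksys X n k W \<and> (p \<in> W \<longleftrightarrow> n \<in> W)} = (Su - {bb p}) \<union> ?E"
  proof (intro set_eqI iffI)
    fix W assume "W \<in> {W. new_ksys X n k W \<and> (p \<in> W \<longleftrightarrow> n \<in> W)}"
    hence W: "new_ksys X n k W" "p \<in> W \<longleftrightarrow> n \<in> W" by auto
    have m: "p \<in> W \<longleftrightarrow> W - {n} = bb p" using mem_newk[OF W(1) p] .
    have o: "openin X W" using W newk_iff by auto
    show "W \<in> (Su - {bb p}) \<union> ?E"
    proof (cases "n \<in> W")
      case True
      hence "W = bb p \<union> {n}" using m W by auto
      thus ?thesis using o by auto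
    next
      case False
      hence "W \<noteq> bb p" using m W by auto
      thus ?thesis using W False by auto
    qed
  next
    fix W assume "W \<in> (Su - {bb p}) \<union> ?E"
    thus "W \<in> {W. new_ksys X n k W \<and> (p \<in> W \<longleftrightarrow> n \<in> W)}"
    proof
      assume "W \<in> Su - {bb p}"
      hence W: "new_ksys X n k W" "n \<notin> W" "W \<noteq> bb p" by auto
      hence "p \<notin> W" using mem_newk[OF W(1) p] by auto
      thus ?thesis using W by auto
    next
      assume "W \<in> ?E"
      hence "W = bb p \<union> {n}" "openin X (bb p \<union> {n})" by (auto split: if_splits)
      thus ?thesis using bbn_S[OF p] mem_newk[OF _ p] by auto
    qed
  qed
  have disj: "(Su - {bb p}) \<inter> ?E = {}" by auto
  have c1: "card (Su - {bb p}) = (if openin X (bb p) then card Su - 1 else card Su)"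
  proof (cases "openin X (bb p)")
    case True
    hence "bb p \<in> Su" using bb_S[OF p] by auto
    thus ?thesis using True finSu by simp
  next
    case False
    hence "bb p \<notin> Su" using newk_iff by auto
    thus ?thesis using False by simp
  qed
  have "card ((Su - {bb p}) \<union> ?E) = card (Su - {bb p}) + card ?E"
    using disj finSu by (intro card_Un_disjoint) auto
  thus "Nnew X n k p = (if openin X (bb p) then card Su - 1 else card Su)
                        + (if openin X (bb p \<union> {n}) then 1 else 0)"
    using Nnew_eq[OF p1] eq c1 by simp
  show "openin X (bb p) \<Longrightarrow> card Su \<ge> 1"
  proof -
    assume "openin X (bb p)"
    hence "bb p \<in> Su" using bb_S[OF p] by auto
    thus ?thesis using finSu by (metis card_0_eq empty_iff less_one not_le)
  qed
qed

end

context L begin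

lemma finI: "finite (Iset X n k)" unfolding Iset_def by auto

lemma N_window: "i \<in> Iset X n k \<Longrightarrow> Nnew X n k i \<le> card Su + 1 \<and> card Su \<le> Nnew X n k i + 1"
proof (cases "i \<in> new_pts X n k")
  case True
  assume "i \<in> Iset X n k"
  show ?thesis using Nnewpt[OF True] by (auto split: if_splits)
next
  case False
  assume "i \<in> Iset X n k"
  thus ?thesis using Nbig[OF _ False] by simp
qed

lemma allN: assumes ne: "Iset X n k \<noteq> {}"
  and m1: "mu X n k (smin X n k + 1) = 0" and m2: "mu X n k (smin X n k + 2) = 0"
  shows "\<forall>i\<in>Iset X n k. Nnew X n k i = smin X n k"
proof
  fix i assume i: "i \<in> Iset X n k"
  let ?s = "smin X n k"
  have "?s \<in> Nnew X n k ` Iset X n k" unfolding smin_def using finI ne by (intro Min_in) auto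
  then obtain j where j: "j \<in> Iset X n k" "Nnew X n k j = ?s" by auto
  have le: "?s \<le> Nnew X n k i" unfolding smin_def using finI i by (intro Min_le) auto
  have "Nnew X n k i \<le> ?s + 2" using N_window[OF i] N_window[OF j(1)] j(2) by linarith
  moreover have "Nnew X n k i \<noteq> ?s + 1"
  proof
    assume "Nnew X n k i = ?s + 1"
    hence "i \<in> {i \<in> Iset X n k. Nnew X n k i = ?s + 1}" using i by auto
    moreover have "finite {i \<in> Iset X n k. Nnew X n k i = ?s + 1}" using finI by auto
    ultimately show False using m1 unfolding mu_def by (metis card_0_eq empty_iff)
  qed
  moreover have "Nnew X n k i \<noteq> ?s + 2"
  proof
    assume "Nnew X n k i = ?s + 2"
    hence "i \<in> {i \<in> Iset X n k. Nnew X n k i = ?s + 2}" using i by auto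
    moreover have "finite {i \<in> Iset X n k. Nnew X n k i = ?s + 2}" using finI by auto
    ultimately show False using m2 unfolding mu_def by (metis card_0_eq empty_iff)
  qed
  ultimately show "Nnew X n k i = ?s" using le by linarith
qed

lemma S_struct: "W \<in> Sk \<Longrightarrow> \<exists>p\<in>new_pts X n k. p \<in> W \<and> W - {n} = bb p \<and> openin X W"
proof -
  assume W: "W \<in> Sk"
  then obtain p where p: "p \<in> new_pts X n k" "W - {n} = bb p" "openin X W" using newk_iff by auto
  have "p \<in> W" using mem_newk[of W p] W p by auto
  thus ?thesis using p by blast
qed

end

context L begin

lemma in_Su_iff: "W \<in> Su \<Longrightarrow> p \<in> new_pts X n k \<Longrightarrow> p \<in> W \<longleftrightarrow> W = bb p"
  using mem_newk by auto

lemma in_Sl_iff: "W \<in> Sk \<Longrightarrow> n \<in> W \<Longrightarrow> p \<in> new_pts X n k \<Longrightarrow> p \<in> W \<longleftrightarrow> W = bb p \<union> {n}"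
  using mem_newk by auto

lemma S_on: "W \<in> Sk \<Longrightarrow> W - {n} \<subseteq> old_pts X n k \<union> new_pts X n k" using sub_oldnew by auto

lemma oldnew_n: "n \<notin> old_pts X n k" "n \<notin> new_pts X n k" using old_iff new_iff by auto

lemma caseA:
  assumes allN: "\<forall>i\<in>Iset X n k. Nnew X n k i = smin X n k"
  and p0: "p0 \<in> new_pts X n k" "openin X (bb p0)" "\<not> openin X (bb p0 \<union> {n})"
  shows "\<exists>A R :: nat \<Rightarrow> nat set.
       {P. new_ksys X n k P} = (\<lambda>j. A j \<union> R j) ` {1..smin X n k + 1}
     \<and> inj_on (\<lambda>j. A j \<union> R j) {1..smin X n k + 1}
     \<and> (\<forall>j\<in>{1..smin X n k + 1}. A j \<subseteq> old_pts X n k \<and> R j \<subseteq> new_pts X n k \<and> R j \<noteq> {}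
          \<and> n \<notin> A j \<union> R j \<and> \<not> openin X (A j \<union> R j \<union> {n}))
     \<and> (\<forall>p\<in>new_pts X n k. \<exists>!j. j \<in> {1..smin X n k + 1} \<and> p \<in> R j)
     \<and> mu X n k (smin X n k) = card (new_pts X n k)"
proof -
  let ?c = "card Su"
  let ?s = "smin X n k"
  have c1: "?c \<ge> 1" using Nnewpt(2)[OF p0(1,2)] .
  have "Nnew X n k p0 = ?c - 1" using Nnewpt(1)[OF p0(1)] p0 by simp
  moreover have "p0 \<in> Iset X n k" using new_sub[OF p0(1)] unfolding Iset_def by auto
  ultimately have sc: "?s + 1 = ?c" using allN c1 by force
  have newI: "\<And>q. q \<in> new_pts X n k \<Longrightarrow> q \<in> Iset X n k" using new_sub unfolding Iset_def by auto
  have allq: "\<And>q. q \<in> new_pts X n k \<Longrightarrow> openin X (bb q) \<and> \<not> openin X (bb q \<union> {n})"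
  proof -
    fix q assume q: "q \<in> new_pts X n k"
    have "Nnew X n k q = ?c - 1" using allN newI[OF q] sc by auto
    thus "openin X (bb q) \<and> \<not> openin X (bb q \<union> {n})"
      using Nnewpt(1)[OF q] star_cases[OF q] c1 by (auto split: if_splits)
  qed
  have Inew: "Iset X n k = new_pts X n k"
  proof
    show "Iset X n k \<subseteq> new_pts X n k"
    proof
      fix i assume i: "i \<in> Iset X n k"
      show "i \<in> new_pts X n k"
      proof (rule ccontr)
        assume "i \<notin> new_pts X n k"
        hence "Nnew X n k i = ?c" using Nbig[OF i] by auto
        thus False using allN i sc by auto
      qed
    qed
  qed (use newI in auto)
  have SSu: "Sk = Su"
  proof (intro set_eqI iffI)
    fix W assume W: "W \<in> Sk"
    then obtain p where p: "p \<in> new_pts X n k" "W - {n} = bb p" "openin X W" using S_struct by blast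
    have "n \<notin> W"
    proof
      assume "n \<in> W"
      hence "W = bb p \<union> {n}" using p(2) by auto
      thus False using allq[OF p(1)] p(3) by auto
    qed
    thus "W \<in> Su" using W by auto
  qed auto
  obtain f where f: "bij_betw f {1..?c} Su" using ex_bij_betw_nat_finite_1[OF finSu] by blast
  define A where "A = (\<lambda>j. f j \<inter> old_pts X n k)"
  define R where "R = (\<lambda>j. f j \<inter> new_pts X n k)"
  have fS: "\<And>j. j \<in> {1..?c} \<Longrightarrow> f j \<in> Su" using f bij_betwE by blast
  have finj: "inj_on f {1..?c}" using f unfolding bij_betw_def by blast
  have fimg: "f ` {1..?c} = Su" using f unfolding bij_betw_def by blast
  have AR: "\<And>j. j \<in> {1..?c} \<Longrightarrow> A j \<union> R j = f j"
  proof -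
    fix j assume j: "j \<in> {1..?c}"
    have "f j - {n} \<subseteq> old_pts X n k \<union> new_pts X n k" using S_on fS[OF j] by auto
    moreover have "n \<notin> f j" using fS[OF j] by auto
    ultimately show "A j \<union> R j = f j" unfolding A_def R_def by auto
  qed
  have img: "(\<lambda>j. A j \<union> R j) ` {1..?c} = f ` {1..?c}" using AR by auto
  have inj: "inj_on (\<lambda>j. A j \<union> R j) {1..?c}"
    using finj AR by (metis (no_types, lifting) inj_on_cong)
  have props: "\<forall>j\<in>{1..?c}. A j \<subseteq> old_pts X n k \<and> R j \<subseteq> new_pts X n k \<and> R j \<noteq> {}
          \<and> n \<notin> A j \<union> R j \<and> \<not> openin X (A j \<union> R j \<union> {n})"
  proof
    fix j assume j: "j \<in> {1..?c}"
    obtain p where p: "p \<in> new_pts X n k" "p \<in> f j" "f j - {n} = bb p" "openin X (f j)"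
      using S_struct fS[OF j] by blast
    have "n \<notin> f j" using fS[OF j] by auto
    hence "f j = bb p" using p(3) by auto
    hence "\<not> openin X (f j \<union> {n})" using allq[OF p(1)] by auto
    moreover have "R j \<noteq> {}" using p unfolding R_def by auto
    ultimately show "A j \<subseteq> old_pts X n k \<and> R j \<subseteq> new_pts X n k \<and> R j \<noteq> {}
          \<and> n \<notin> A j \<union> R j \<and> \<not> openin X (A j \<union> R j \<union> {n})"
      using AR[OF j] \<open>n \<notin> f j\<close> unfolding A_def R_def by auto
  qed
  have part: "\<forall>p\<in>new_pts X n k. \<exists>!j. j \<in> {1..?c} \<and> p \<in> R j"
  proof
    fix p assume p: "p \<in> new_pts X n k"
    have "new_ksys X n k (bb p)" using bb_S[OF p] allq[OF p] by blast
    hence "bb p \<in> Su" by simp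
    hence "bb p \<in> f ` {1..?c}" by (subst fimg)
    then obtain j where j1: "j \<in> {1..?c}" and j2: "bb p = f j" by blast
    have j: "j \<in> {1..?c}" "f j = bb p" using j1 j2 by simp_all
    have Rj: "p \<in> R j' \<longleftrightarrow> f j' = bb p" if j': "j' \<in> {1..?c}" for j'
    proof -
      have "p \<in> R j' \<longleftrightarrow> p \<in> f j'" unfolding R_def using p by simp
      also have "\<dots> \<longleftrightarrow> f j' = bb p" using in_Su_iff[OF fS[OF j'] p] .
      finally show ?thesis .
    qed
    show "\<exists>!j. j \<in> {1..?c} \<and> p \<in> R j"
    proof (rule ex1I[of _ j])
      show "j \<in> {1..?c} \<and> p \<in> R j" using j(1) Rj[OF j(1)] j(2) by simp
      fix j' assume jj: "j' \<in> {1..?c} \<and> p \<in> R j'"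
      hence j'1: "j' \<in> {1..?c}" by simp
      have "f j' = bb p" using Rj[OF j'1] jj by simp
      hence "f j' = f j" using j(2) by simp
      thus "j' = j" using inj_onD[OF finj _ j'1 j(1)] by simp
    qed
  qed
  have "mu X n k ?s = card (new_pts X n k)"
  proof -
    have "{i \<in> Iset X n k. Nnew X n k i = ?s} = Iset X n k" using allN by auto
    thus ?thesis unfolding mu_def using Inew by simp
  qed
  moreover have "Sk = (\<lambda>j. A j \<union> R j) ` {1..?c}" using img SSu fimg by simp
  ultimately show ?thesis unfolding sc using inj props part by blast
qed

lemma caseB:
  assumes allN: "\<forall>i\<in>Iset X n k. Nnew X n k i = smin X n k"
  and ne: "Iset X n k \<noteq> {}"
  and p0: "p0 \<in> new_pts X n k" "\<not> openin X (bb p0)" "openin X (bb p0 \<union> {n})"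
  shows "\<exists>(x::nat) (A :: nat \<Rightarrow> nat set) (R :: nat \<Rightarrow> nat set). x \<ge> 1 \<and>
       {P. new_ksys X n k P} = (\<lambda>j. A j \<union> R j \<union> {n}) ` {1..x}
     \<and> inj_on (\<lambda>j. A j \<union> R j \<union> {n}) {1..x}
     \<and> (\<forall>j\<in>{1..x}. A j \<subseteq> old_pts X n k \<and> R j \<subseteq> new_pts X n k \<and> R j \<noteq> {}
          \<and> \<not> openin X (A j \<union> R j))
     \<and> (\<forall>p\<in>new_pts X n k. \<exists>!j. j \<in> {1..x} \<and> p \<in> R j)"
proof -
  let ?c = "card Su"
  let ?s = "smin X n k"
  have newI: "\<And>q. q \<in> new_pts X n k \<Longrightarrow> q \<in> Iset X n k" using new_sub unfolding Iset_def by auto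
  have "Nnew X n k p0 = ?c + 1" using Nnewpt(1)[OF p0(1)] p0 by simp
  hence sc: "?s = ?c + 1" using allN newI[OF p0(1)] by simp
  have allq: "\<And>q. q \<in> new_pts X n k \<Longrightarrow> \<not> openin X (bb q) \<and> openin X (bb q \<union> {n})"
  proof -
    fix q assume q: "q \<in> new_pts X n k"
    have e: "Nnew X n k q = ?c + 1" using allN newI[OF q] sc by simp
    have "\<not> openin X (bb q)"
    proof
      assume "openin X (bb q)"
      thus False using e Nnewpt(1)[OF q] Nnewpt(2)[OF q] by (simp split: if_splits)
    qed
    thus "\<not> openin X (bb q) \<and> openin X (bb q \<union> {n})"
      using e Nnewpt(1)[OF q] by (simp split: if_splits)
  qed
  have nS: "\<And>W. W \<in> Sk \<Longrightarrow> n \<in> W"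
  proof (rule ccontr)
    fix W assume W: "W \<in> Sk" and nW: "n \<notin> W"
    obtain p where p: "p \<in> new_pts X n k" "W - {n} = bb p" "openin X W" using S_struct W by blast
    have "W = bb p" using p(2) nW by auto
    thus False using allq[OF p(1)] p(3) by simp
  qed
  obtain i where i: "i \<in> Iset X n k" using ne by blast
  have inew: "i \<in> new_pts X n k"
  proof (rule ccontr)
    assume "i \<notin> new_pts X n k"
    hence "Nnew X n k i = ?c" using Nbig[OF i] by simp
    thus False using allN i sc by simp
  qed
  have "new_ksys X n k (bb i \<union> {n})" using bbn_S[OF inew] allq[OF inew] by blast
  hence "Sk \<noteq> {}" by blast
  hence x1: "card Sk \<ge> 1" using finS by (metis One_nat_def Suc_leI card_gt_0_iff)
  obtain f where f: "bij_betw f {1..card Sk} Sk" using ex_bij_betw_nat_finite_1[OF finS] by blast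
  have fS: "\<And>j. j \<in> {1..card Sk} \<Longrightarrow> f j \<in> Sk" using f bij_betwE by blast
  have finj: "inj_on f {1..card Sk}" using f unfolding bij_betw_def by blast
  have fimg: "f ` {1..card Sk} = Sk" using f unfolding bij_betw_def by blast
  define A where "A = (\<lambda>j. f j \<inter> old_pts X n k)"
  define R where "R = (\<lambda>j. f j \<inter> new_pts X n k)"
  have AR: "\<And>j. j \<in> {1..card Sk} \<Longrightarrow> A j \<union> R j = f j - {n}"
  proof -
    fix j assume j: "j \<in> {1..card Sk}"
    have "f j - {n} \<subseteq> old_pts X n k \<union> new_pts X n k" using S_on fS[OF j] by blast
    thus "A j \<union> R j = f j - {n}" unfolding A_def R_def using oldnew_n by blast
  qed
  have ARn: "\<And>j. j \<in> {1..card Sk} \<Longrightarrow> A j \<union> R j \<union> {n} = f j"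
    using AR nS fS by blast
  have img: "(\<lambda>j. A j \<union> R j \<union> {n}) ` {1..card Sk} = Sk"
  proof -
    have "(\<lambda>j. A j \<union> R j \<union> {n}) ` {1..card Sk} = f ` {1..card Sk}"
      using ARn by (intro image_cong) auto
    thus ?thesis using fimg by simp
  qed
  have inj: "inj_on (\<lambda>j. A j \<union> R j \<union> {n}) {1..card Sk}"
    using finj ARn inj_on_cong[of "{1..card Sk}" "\<lambda>j. A j \<union> R j \<union> {n}" f] by simp
  have props: "\<forall>j\<in>{1..card Sk}. A j \<subseteq> old_pts X n k \<and> R j \<subseteq> new_pts X n k \<and> R j \<noteq> {}
          \<and> \<not> openin X (A j \<union> R j)"
  proof
    fix j assume j: "j \<in> {1..card Sk}"
    obtain p where p: "p \<in> new_pts X n k" "p \<in> f j" "f j - {n} = bb p" "openin X (f j)"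
      using S_struct fS[OF j] by blast
    have "\<not> openin X (A j \<union> R j)" using AR[OF j] p(3) allq[OF p(1)] by simp
    moreover have "R j \<noteq> {}" using p unfolding R_def by blast
    ultimately show "A j \<subseteq> old_pts X n k \<and> R j \<subseteq> new_pts X n k \<and> R j \<noteq> {}
          \<and> \<not> openin X (A j \<union> R j)" unfolding A_def R_def by blast
  qed
  have part: "\<forall>p\<in>new_pts X n k. \<exists>!j. j \<in> {1..card Sk} \<and> p \<in> R j"
  proof
    fix p assume p: "p \<in> new_pts X n k"
    have "new_ksys X n k (bb p \<union> {n})" using bbn_S[OF p] allq[OF p] by blast
    hence "bb p \<union> {n} \<in> Sk" by simp
    hence "bb p \<union> {n} \<in> f ` {1..card Sk}" by (subst fimg)
    then obtain j where j1: "j \<in> {1..card Sk}" and j2: "bb p \<union> {n} = f j" by blast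
    have Rj: "p \<in> R j' \<longleftrightarrow> f j' = bb p \<union> {n}" if j': "j' \<in> {1..card Sk}" for j'
    proof -
      have "p \<in> R j' \<longleftrightarrow> p \<in> f j'" unfolding R_def using p by simp
      also have "\<dots> \<longleftrightarrow> f j' = bb p \<union> {n}" using in_Sl_iff[OF fS[OF j'] nS[OF fS[OF j']] p] .
      finally show ?thesis .
    qed
    show "\<exists>!j. j \<in> {1..card Sk} \<and> p \<in> R j"
    proof (rule ex1I[of _ j])
      show "j \<in> {1..card Sk} \<and> p \<in> R j" using j1 Rj[OF j1] j2 by simp
      fix j' assume jj: "j' \<in> {1..card Sk} \<and> p \<in> R j'"
      hence j'1: "j' \<in> {1..card Sk}" by simp
      have "f j' = bb p \<union> {n}" using Rj[OF j'1] jj by simp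
      hence "f j' = f j" using j2 by simp
      thus "j' = j" using inj_onD[OF finj _ j'1 j1] by simp
    qed
  qed
  show ?thesis
    apply (rule exI[of _ "card Sk"], rule exI[of _ A], rule exI[of _ R])
    using x1 img inj props part by simp
qed

lemma caseC:
  assumes allN: "\<forall>i\<in>Iset X n k. Nnew X n k i = smin X n k"
  and ne: "Iset X n k \<noteq> {}"
  and allq: "\<And>q. q \<in> new_pts X n k \<Longrightarrow> openin X (bb q) \<and> openin X (bb q \<union> {n})"
  shows "\<exists>A R :: nat \<Rightarrow> nat set.
       {P. new_ksys X n k P} = (\<lambda>j. A j \<union> R j) ` {1..smin X n k}
                                \<union> (\<lambda>j. A j \<union> R j \<union> {n}) ` {1..smin X n k}
     \<and> inj_on (\<lambda>j. A j \<union> R j) {1..smin X n k}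
     \<and> (\<forall>j\<in>{1..smin X n k}. A j \<subseteq> old_pts X n k \<and> R j \<subseteq> new_pts X n k \<and> R j \<noteq> {})"
proof -
  let ?c = "card Su"
  let ?s = "smin X n k"
  obtain i where i: "i \<in> Iset X n k" using ne by blast
  have "Nnew X n k i = ?c"
  proof (cases "i \<in> new_pts X n k")
    case True
    thus ?thesis using Nnewpt(1)[OF True] Nnewpt(2)[OF True] allq[OF True] by simp
  next
    case False
    thus ?thesis using Nbig[OF i] by simp
  qed
  hence sc: "?s = ?c" using allN i by simp
  have Sdec: "Sk = Su \<union> (\<lambda>B. B \<union> {n}) ` Su"
  proof (intro set_eqI iffI)
    fix W assume W: "W \<in> Sk"
    obtain p where p: "p \<in> new_pts X n k" "W - {n} = bb p" "openin X W" using S_struct W by blast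
    show "W \<in> Su \<union> (\<lambda>B. B \<union> {n}) ` Su"
    proof (cases "n \<in> W")
      case True
      hence "W = bb p \<union> {n}" using p(2) by blast
      moreover have "bb p \<in> Su" using bb_S[OF p(1)] allq[OF p(1)] by simp
      ultimately show ?thesis by blast
    next
      case False
      thus ?thesis using W by simp
    qed
  next
    fix W assume "W \<in> Su \<union> (\<lambda>B. B \<union> {n}) ` Su"
    thus "W \<in> Sk"
    proof
      assume "W \<in> Su" thus ?thesis by simp
    next
      assume "W \<in> (\<lambda>B. B \<union> {n}) ` Su"
      then obtain B where B: "B \<in> Su" "W = B \<union> {n}" by blast
      obtain p where p: "p \<in> new_pts X n k" "B - {n} = bb p" "openin X B" using S_struct B(1) by blast
      have "B = bb p" using p(2) B(1) by blast
      thus ?thesis using bbn_S[OF p(1)] allq[OF p(1)] B(2) by simp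
    qed
  qed
  obtain f where f: "bij_betw f {1..?c} Su" using ex_bij_betw_nat_finite_1[OF finSu] by blast
  have fS: "\<And>j. j \<in> {1..?c} \<Longrightarrow> f j \<in> Su" using f bij_betwE by blast
  have finj: "inj_on f {1..?c}" using f unfolding bij_betw_def by blast
  have fimg: "f ` {1..?c} = Su" using f unfolding bij_betw_def by blast
  define A where "A = (\<lambda>j. f j \<inter> old_pts X n k)"
  define R where "R = (\<lambda>j. f j \<inter> new_pts X n k)"
  have AR: "\<And>j. j \<in> {1..?c} \<Longrightarrow> A j \<union> R j = f j"
  proof -
    fix j assume j: "j \<in> {1..?c}"
    have "f j - {n} \<subseteq> old_pts X n k \<union> new_pts X n k" using S_on fS[OF j] by blast
    moreover have "n \<notin> f j" using fS[OF j] by simp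
    ultimately show "A j \<union> R j = f j" unfolding A_def R_def by blast
  qed
  have img1: "(\<lambda>j. A j \<union> R j) ` {1..?c} = Su"
  proof -
    have "(\<lambda>j. A j \<union> R j) ` {1..?c} = f ` {1..?c}" using AR by (intro image_cong) auto
    thus ?thesis using fimg by simp
  qed
  have img2: "(\<lambda>j. A j \<union> R j \<union> {n}) ` {1..?c} = (\<lambda>B. B \<union> {n}) ` Su"
  proof -
    have "(\<lambda>j. A j \<union> R j \<union> {n}) ` {1..?c} = (\<lambda>B. B \<union> {n}) ` (f ` {1..?c})"
      unfolding image_image using AR by (intro image_cong) auto
    thus ?thesis using fimg by simp
  qed
  have inj: "inj_on (\<lambda>j. A j \<union> R j) {1..?c}"
    using finj AR inj_on_cong[of "{1..?c}" "\<lambda>j. A j \<union> R j" f] by simp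
  have props: "\<forall>j\<in>{1..?c}. A j \<subseteq> old_pts X n k \<and> R j \<subseteq> new_pts X n k \<and> R j \<noteq> {}"
  proof
    fix j assume j: "j \<in> {1..?c}"
    obtain p where p: "p \<in> new_pts X n k" "p \<in> f j"
      using S_struct fS[OF j] by blast
    show "A j \<subseteq> old_pts X n k \<and> R j \<subseteq> new_pts X n k \<and> R j \<noteq> {}"
      using p unfolding A_def R_def by blast
  qed
  show ?thesis
    apply (rule exI[of _ A], rule exI[of _ R])
    unfolding sc
    apply (intro conjI)
    subgoal unfolding img1 img2 by (rule Sdec)
    subgoal by (rule inj)
    subgoal by (rule props)
    done
qed

end

context L begin
lemma main:
  assumes "Iset X n k \<noteq> {}"
    and "mu X n k (smin X n k) \<noteq> 0"
    and "mu X n k (smin X n k + 1) = 0" and "mu X n k (smin X n k + 2) = 0"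
  shows
   "(\<exists>A R :: nat \<Rightarrow> nat set.
       {P. new_ksys X n k P} = (\<lambda>j. A j \<union> R j) ` {1..smin X n k + 1}
     \<and> inj_on (\<lambda>j. A j \<union> R j) {1..smin X n k + 1}
     \<and> (\<forall>j\<in>{1..smin X n k + 1}. A j \<subseteq> old_pts X n k \<and> R j \<subseteq> new_pts X n k \<and> R j \<noteq> {}
          \<and> n \<notin> A j \<union> R j \<and> \<not> openin X (A j \<union> R j \<union> {n}))
     \<and> (\<forall>p\<in>new_pts X n k. \<exists>!j. j \<in> {1..smin X n k + 1} \<and> p \<in> R j)
     \<and> mu X n k (smin X n k) = card (new_pts X n k))
  \<or> (\<exists>A R :: nat \<Rightarrow> nat set.
       {P. new_ksys X n k P} = (\<lambda>j. A j \<union> R j) ` {1..smin X n k}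
                                \<union> (\<lambda>j. A j \<union> R j \<union> {n}) ` {1..smin X n k}
     \<and> inj_on (\<lambda>j. A j \<union> R j) {1..smin X n k}
     \<and> (\<forall>j\<in>{1..smin X n k}. A j \<subseteq> old_pts X n k \<and> R j \<subseteq> new_pts X n k \<and> R j \<noteq> {}))
  \<or> ({P. new_ksys X n k P} = {} \<and> smin X n k = 0)
  \<or> (\<exists>(x::nat) (A :: nat \<Rightarrow> nat set) (R :: nat \<Rightarrow> nat set). x \<ge> 1 \<and>
       {P. new_ksys X n k P} = (\<lambda>j. A j \<union> R j \<union> {n}) ` {1..x}
     \<and> inj_on (\<lambda>j. A j \<union> R j \<union> {n}) {1..x}
     \<and> (\<forall>j\<in>{1..x}. A j \<subseteq> old_pts X n k \<and> R j \<subseteq> new_pts X n k \<and> R j \<noteq> {}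
          \<and> \<not> openin X (A j \<union> R j))
     \<and> (\<forall>p\<in>new_pts X n k. \<exists>!j. j \<in> {1..x} \<and> p \<in> R j))"
  proof -
  have allN: "\<forall>i\<in>Iset X n k. Nnew X n k i = smin X n k" using allN assms by blast
  show ?thesis
  proof (cases "\<exists>p\<in>new_pts X n k. openin X (bb p) \<and> \<not> openin X (bb p \<union> {n})")
    case True
    then obtain p where "p \<in> new_pts X n k" "openin X (bb p)" "\<not> openin X (bb p \<union> {n})" by blast
    from caseA[OF allN this] show ?thesis by (rule disjI1)
  next
    case F1: False
    show ?thesis
    proof (cases "\<exists>p\<in>new_pts X n k. \<not> openin X (bb p) \<and> openin X (bb p \<union> {n})")
      case True
      then obtain p where "p \<in> new_pts X n k" "\<not> openin X (bb p)" "openin X (bb p \<union> {n})" by blast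
      from caseB[OF allN assms(1) this] show ?thesis by blast
    next
      case False
      have "\<And>q. q \<in> new_pts X n k \<Longrightarrow> openin X (bb q) \<and> openin X (bb q \<union> {n})"
        using F1 False star_cases by blast
      from caseC[OF allN assms(1) this] show ?thesis by blast
    qed
  qed
qed
end

theorem theorem3:
  fixes X :: "nat topology" and n k :: nat
  assumes "n \<ge> 2" and "topspace X = {1..n}" and "k \<ge> 1"
    and "Iset X n k \<noteq> {}"
    and "mu X n k (smin X n k) \<noteq> 0"
    and "mu X n k (smin X n k + 1) = 0" and "mu X n k (smin X n k + 2) = 0"
  shows
   "(\<exists>A R :: nat \<Rightarrow> nat set.
       {P. new_ksys X n k P} = (\<lambda>j. A j \<union> R j) ` {1..smin X n k + 1}
     \<and> inj_on (\<lambda>j. A j \<union> R j) {1..smin X n k + 1}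
     \<and> (\<forall>j\<in>{1..smin X n k + 1}. A j \<subseteq> old_pts X n k \<and> R j \<subseteq> new_pts X n k \<and> R j \<noteq> {}
          \<and> n \<notin> A j \<union> R j \<and> \<not> openin X (A j \<union> R j \<union> {n}))
     \<and> (\<forall>p\<in>new_pts X n k. \<exists>!j. j \<in> {1..smin X n k + 1} \<and> p \<in> R j)
     \<and> mu X n k (smin X n k) = card (new_pts X n k))
  \<or> (\<exists>A R :: nat \<Rightarrow> nat set.
       {P. new_ksys X n k P} = (\<lambda>j. A j \<union> R j) ` {1..smin X n k}
                                \<union> (\<lambda>j. A j \<union> R j \<union> {n}) ` {1..smin X n k}
     \<and> inj_on (\<lambda>j. A j \<union> R j) {1..smin X n k}
     \<and> (\<forall>j\<in>{1..smin X n k}. A j \<subseteq> old_pts X n k \<and> R j \<subseteq> new_pts X n k \<and> R j \<noteq> {}))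
  \<or> ({P. new_ksys X n k P} = {} \<and> smin X n k = 0)
  \<or> (\<exists>(x::nat) (A :: nat \<Rightarrow> nat set) (R :: nat \<Rightarrow> nat set). x \<ge> 1 \<and>
       {P. new_ksys X n k P} = (\<lambda>j. A j \<union> R j \<union> {n}) ` {1..x}
     \<and> inj_on (\<lambda>j. A j \<union> R j \<union> {n}) {1..x}
     \<and> (\<forall>j\<in>{1..x}. A j \<subseteq> old_pts X n k \<and> R j \<subseteq> new_pts X n k \<and> R j \<noteq> {}
          \<and> \<not> openin X (A j \<union> R j))
     \<and> (\<forall>p\<in>new_pts X n k. \<exists>!j. j \<in> {1..x} \<and> p \<in> R j))"
  proof -
  interpret L X n k using assms(1-3) by unfold_locales
  show ?thesis using main assms(4-7) by blast
qed

end
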